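(* Let $B$ be a Batanin tree and $n\in\mathbb N$. Then the cosource and cotarget $s^B_n,t^B_n\colon\mathrm{Pos}(\partial_nB)\to\mathrm{Pos}(B)$ each induce bijections between the sets of positions of dimension $k$ for every $k<n$. Moreover, they are injective on positions of dimension $n$, and for every position $p\in\mathrm{Pos}_n(B)$ there exists a unique position $q\in\mathrm{Pos}_n(\partial_nB)$ such that $s^B_n(q)$, $t^B_n(q)$ and $p$ are parallel.
   Context: Batanin trees are generated inductively: for every finite list $B_1,\dots,B_n$ ($n\ge0$) of Batanin trees there is a tree $[B_1,\dots,B_n]$. The suspension $\Sigma Y$ of a globular set $Y$ has $0$-cells $v_-,v_+$ and $(\Sigma Y)_{n+1}=Y_n$, every $1$-cell having source $v_-$ and target $v_+$. The globular set of positions is $\mathrm{Pos}([B_1,\dots,B_n])=\Sigma\mathrm{Pos}(B_1)\vee\cdots\vee\Sigma\mathrm{Pos}(B_n)$, the iterated wedge sum gluing $v_+$ of each summand to $v_-$ of the next (a single $0$-cell when $n=0$); $\mathrm{Pos}_n(B)$ denotes its set of $n$-cells. Two cells are parallel if they have the same source and target (all $0$-cells are parallel). Boundary: $\partial_0B=[\,]$, $\partial_{k+1}[B_1,\dots,B_n]=[\partial_kB_1,\dots,\partial_kB_n]$. Cosource/cotarget $s^B_k,t^B_k\colon\mathrm{Pos}(\partial_kB)\to\mathrm{Pos}(B)$ for $B=[B_1,\dots,B_n]$: $s^B_0$ picks $\mathrm{inc}_1(v_-)$, $t^B_0$ picks $\mathrm{inc}_n(v_+)$, $s^B_{k+1}=\bigvee_i\Sigma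 s^{B_i}_k$, $t^B_{k+1}=\bigvee_i\Sigma t^{B_i}_k$, where $\mathrm{inc}_i$ is the inclusion of the $i$-th wedge summand. *)

theory Defs
  imports Main
begin

datatype btree = Node "btree list"

primrec children :: "btree \<Rightarrow> btree list" where
  "children (Node Bs) = Bs"

text \<open>The 0-cells of Pos([B1..Bn]) = \<Sigma>Pos(B1) \<or> ... \<or> \<Sigma>Pos(Bn) are the n+1 wedge
  points V 0, ..., V n (V (i-1) = v_- of the i-th summand, V i = its v_+, 0-indexed below);
  a (k+1)-cell is C i c with i < n and c a k-cell of Pos(B_(i+1)) (0-indexed: children ! i).\<close>
datatype cell = V nat | C nat cell

primrec cdim :: "cell \<Rightarrow> nat" where
  "cdim (V j) = 0"
| "cdim (C i c) = Suc (cdim c)"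

primrec pos :: "nat \<Rightarrow> btree \<Rightarrow> cell set" where
  "pos 0 B = {V j | j. j \<le> length (children B)}"
| "pos (Suc k) B = {C i c | i c. i < length (children B) \<and> c \<in> pos k (children B ! i)}"

text \<open>Source and target of a cell of positive dimension (meaningless on 0-cells).\<close>
fun csrc :: "cell \<Rightarrow> cell" where
  "csrc (V j) = V j"
| "csrc (C i (V j)) = V i"
| "csrc (C i (C j c)) = C i (csrc (C j c))"

fun ctgt :: "cell \<Rightarrow> cell" where
  "ctgt (V j) = V j"
| "ctgt (C i (V j)) = V (Suc i)"
| "ctgt (C i (C j c)) = C i (ctgt (C j c))"

definition parallel :: "cell \<Rightarrow> cell \<Rightarrow> bool" where
  "parallel p q \<longleftrightarrow> cdim p = cdim q \<and>
     (cdim p = 0 \<or> (csrc p = csrc q \<and> ctgt p = ctgt q))"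

primrec bd :: "nat \<Rightarrow> btree \<Rightarrow> btree" where
  "bd 0 B = Node []"
| "bd (Suc k) B = Node (map (bd k) (children B))"

primrec cosrc :: "nat \<Rightarrow> btree \<Rightarrow> cell \<Rightarrow> cell" where
  "cosrc 0 B c = V 0"
| "cosrc (Suc k) B c = (case c of V j \<Rightarrow> V j
                                | C i c' \<Rightarrow> C i (cosrc k (children B ! i) c'))"

primrec cotgt :: "nat \<Rightarrow> btree \<Rightarrow> cell \<Rightarrow> cell" where
  "cotgt 0 B c = V (length (children B))"
| "cotgt (Suc k) B c = (case c of V j \<Rightarrow> V j
                                | C i c' \<Rightarrow> C i (cotgt k (children B ! i) c'))"

end

theory Submission
  imports Defs
begin

lemma pos_dim: "c \<in> pos k B \<Longrightarrow> cdim c = k"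
  by (induction k arbitrary: B c) auto

lemma par_C: "parallel (C i x) (C j y) \<longleftrightarrow> i = j \<and> parallel x y"
  by (cases x; cases y) (auto simp: parallel_def)

lemma cosrc_dim: "cdim q = n \<Longrightarrow> cdim (cosrc n B q) = n"
  by (induction n arbitrary: B q) (auto split: cell.splits)

lemma cotgt_dim: "cdim q = n \<Longrightarrow> cdim (cotgt n B q) = n"
  by (induction n arbitrary: B q) (auto split: cell.splits)

lemma cosrc_inj: "k \<le> n \<Longrightarrow> inj_on (cosrc n B) (pos k (bd n B))"
proof (induction n arbitrary: B k)
  case 0 then show ?case by (auto simp: inj_on_def)
next
  case (Suc m)
  show ?case
  proof (cases k)
    case 0 then show ?thesis by (auto simp: inj_on_def)
  next
    case (Suc k')
    with Suc.prems have "k' \<le> m" by simp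
    with Suc.IH show ?thesis using Suc
      by (fastforce simp: inj_on_def)
  qed
qed

lemma cotgt_inj: "k \<le> n \<Longrightarrow> inj_on (cotgt n B) (pos k (bd n B))"
proof (induction n arbitrary: B k)
  case 0 then show ?case by (auto simp: inj_on_def)
next
  case (Suc m)
  show ?case
  proof (cases k)
    case 0 then show ?thesis by (auto simp: inj_on_def)
  next
    case (Suc k')
    with Suc.prems have "k' \<le> m" by simp
    with Suc.IH show ?thesis using Suc
      by (fastforce simp: inj_on_def)
  qed
qed

lemma cosrc_img: "k < n \<Longrightarrow> cosrc n B ` pos k (bd n B) = pos k B"
proof (induction n arbitrary: B k)
  case 0 then show ?case by simp
next
  case (Suc m)
  show ?case
  proof (cases k)
    case 0 then show ?thesis by (auto simp: image_def)
  next
    case (Suc k')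
    with Suc.prems have km: "k' < m" by simp
    show ?thesis
    proof
      show "cosrc (Suc m) B ` pos k (bd (Suc m) B) \<subseteq> pos k B"
        proof
        fix x assume "x \<in> cosrc (Suc m) B ` pos k (bd (Suc m) B)"
        then obtain i c where "x = C i (cosrc m (children B ! i) c)" "i < length (children B)"
          "c \<in> pos k' (bd m (children B ! i))" using Suc by auto
        moreover have "cosrc m (children B ! i) c \<in> pos k' (children B ! i)"
          using Suc.IH[OF km, of "children B ! i"] calculation(3) by blast
        ultimately show "x \<in> pos k B" using Suc by simp
      qed
    next
      show "pos k B \<subseteq> cosrc (Suc m) B ` pos k (bd (Suc m) B)"
      proof
        fix p assume "p \<in> pos k B"
        then obtain i c where p: "p = C i c" "i < length (children B)"
          "c \<in> pos k' (children B ! i)" using Suc by auto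
        then obtain c' where "c' \<in> pos k' (bd m (children B ! i))"
          "c = cosrc m (children B ! i) c'" using Suc.IH[OF km, of "children B ! i"] by auto
        then show "p \<in> cosrc (Suc m) B ` pos k (bd (Suc m) B)"
          using p Suc by (auto intro!: image_eqI[where x="C i c'"])
      qed
    qed
  qed
qed

lemma cotgt_img: "k < n \<Longrightarrow> cotgt n B ` pos k (bd n B) = pos k B"
proof (induction n arbitrary: B k)
  case 0 then show ?case by simp
next
  case (Suc m)
  show ?case
  proof (cases k)
    case 0 then show ?thesis by (auto simp: image_def)
  next
    case (Suc k')
    with Suc.prems have km: "k' < m" by simp
    show ?thesis
    proof
      show "cotgt (Suc m) B ` pos k (bd (Suc m) B) \<subseteq> pos k B"
        proof
        fix x assume "x \<in> cotgt (Suc m) B ` pos k (bd (Suc m) B)"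
        then obtain i c where "x = C i (cotgt m (children B ! i) c)" "i < length (children B)"
          "c \<in> pos k' (bd m (children B ! i))" using Suc by auto
        moreover have "cotgt m (children B ! i) c \<in> pos k' (children B ! i)"
          using Suc.IH[OF km, of "children B ! i"] calculation(3) by blast
        ultimately show "x \<in> pos k B" using Suc by simp
      qed
    next
      show "pos k B \<subseteq> cotgt (Suc m) B ` pos k (bd (Suc m) B)"
      proof
        fix p assume "p \<in> pos k B"
        then obtain i c where p: "p = C i c" "i < length (children B)"
          "c \<in> pos k' (children B ! i)" using Suc by auto
        then obtain c' where "c' \<in> pos k' (bd m (children B ! i))"
          "c = cotgt m (children B ! i) c'" using Suc.IH[OF km, of "children B ! i"] by auto
        then show "p \<in> cotgt (Suc m) B ` pos k (bd (Suc m) B)"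
          using p Suc by (auto intro!: image_eqI[where x="C i c'"])
      qed
    qed
  qed
qed

lemma par_ex: "p \<in> pos n B \<Longrightarrow> \<exists>!q. q \<in> pos n (bd n B) \<and>
              parallel (cosrc n B q) (cotgt n B q) \<and>
              parallel (cosrc n B q) p \<and> parallel (cotgt n B q) p"
proof (induction n arbitrary: B p)
  case 0 then show ?case by (auto simp: parallel_def)
next
  case (Suc m)
  then obtain i c where p: "p = C i c" "i < length (children B)"
    "c \<in> pos m (children B ! i)" by auto
  from Suc.IH[OF p(3)] obtain q' where q':
    "q' \<in> pos m (bd m (children B ! i))"
    "parallel (cosrc m (children B ! i) q') (cotgt m (children B ! i) q')"
    "parallel (cosrc m (children B ! i) q') c"
    "parallel (cotgt m (children B ! i) q') c"
    and uq: "\<And>r. r \<in> pos m (bd m (children B ! i)) \<Longrightarrow>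
       parallel (cosrc m (children B ! i) r) (cotgt m (children B ! i) r) \<Longrightarrow>
       parallel (cosrc m (children B ! i) r) c \<Longrightarrow>
       parallel (cotgt m (children B ! i) r) c \<Longrightarrow> r = q'"
    by metis
  show ?case
  proof (rule ex1I[where a="C i q'"])
    show "C i q' \<in> pos (Suc m) (bd (Suc m) B) \<and>
      parallel (cosrc (Suc m) B (C i q')) (cotgt (Suc m) B (C i q')) \<and>
      parallel (cosrc (Suc m) B (C i q')) p \<and> parallel (cotgt (Suc m) B (C i q')) p"
      using p q' by (simp add: par_C)
  next
    fix q assume h: "q \<in> pos (Suc m) (bd (Suc m) B) \<and>
      parallel (cosrc (Suc m) B q) (cotgt (Suc m) B q) \<and>
      parallel (cosrc (Suc m) B q) p \<and> parallel (cotgt (Suc m) B q) p"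
    then obtain j r where q: "q = C j r" "j < length (children B)"
      "r \<in> pos m (bd m (children B ! j))" by auto
    with h p have "j = i" by (simp add: par_C)
    with h p q have "r = q'" by (intro uq) (simp_all add: par_C)
    with q \<open>j = i\<close> show "q = C i q'" by simp
  qed
qed

theorem lemma4p1:
  fixes B :: btree and n :: nat
  shows "(\<forall>k<n. bij_betw (cosrc n B) (pos k (bd n B)) (pos k B)
               \<and> bij_betw (cotgt n B) (pos k (bd n B)) (pos k B))
       \<and> inj_on (cosrc n B) (pos n (bd n B))
       \<and> inj_on (cotgt n B) (pos n (bd n B))
       \<and> (\<forall>p\<in>pos n B. \<exists>!q. q \<in> pos n (bd n B) \<and>
              parallel (cosrc n B q) (cotgt n B q) \<and>
              parallel (cosrc n B q) p \<and> parallel (cotgt n B q) p)"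
  using cosrc_inj cotgt_inj cosrc_img cotgt_img par_ex
  by (simp add: bij_betw_def)

end
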